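(* Let $1<a_1<a_2$ be coprime integers, $S=\langle a_1,a_2\rangle$, and let $t\in(1,\infty)$. If $r_0(t)$ is irrational, then $\Delta_t(S)$ is dense in $[0,|a_1a_2P(t)|]$, i.e. $[0,|a_1a_2P(t)|]$ is contained in the closure of $\Delta_t(S)$.
   Context: $S=\{\lambda_1a_1+\lambda_2a_2:\lambda_1,\lambda_2\in\mathbb{N}_0\}$. For $t\in[1,\infty)$ and $(u,v)\in\mathbb{R}^2$, $\|(u,v)\|_t=(|u|^t+|v|^t)^{1/t}$. For $x\in S$, $Z(x)=\{(m,n)\in\mathbb{N}_0^2: ma_1+na_2=x\}$, $\mathscr{L}_t(x)=\{\|f\|_t: f\in Z(x)\}$, $\Delta_t(x)$ is the set of differences between consecutive elements of $\mathscr{L}_t(x)$ (in increasing order), and $\Delta_t(S)=\bigcup_{x\in S}\Delta_t(x)$. Define $\mu_t(r)=\left\|\left(\frac{1-r}{a_1},\frac{r}{a_2}\right)\right\|_t$ for $r\in[0,1]$, $r_0(t)=\min\{r\in[0,1]:\mu_t(r)=\frac{1}{a_2}\}$, and $P(t)=\mu_t'(r_0(t))$ (derivative in $r$). *)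

theory Defs
  imports "HOL-Analysis.Analysis"
begin

definition numsg :: "nat \<Rightarrow> nat \<Rightarrow> nat set" where
  "numsg a1 a2 = {l1 * a1 + l2 * a2 | l1 l2. True}"

definition tnorm :: "real \<Rightarrow> real \<Rightarrow> real \<Rightarrow> real" where
  "tnorm t u v = (\<bar>u\<bar> powr t + \<bar>v\<bar> powr t) powr (1 / t)"

definition factZ :: "nat \<Rightarrow> nat \<Rightarrow> nat \<Rightarrow> (nat \<times> nat) set" where
  "factZ a1 a2 x = {(m, n). m * a1 + n * a2 = x}"

definition lenset :: "real \<Rightarrow> nat \<Rightarrow> nat \<Rightarrow> nat \<Rightarrow> real set" where
  "lenset t a1 a2 x = {tnorm t (real m) (real n) | m n. (m, n) \<in> factZ a1 a2 x}"

definition consec_diffs :: "real set \<Rightarrow> real set" where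
  "consec_diffs L = {q - p | p q. p \<in> L \<and> q \<in> L \<and> p < q \<and> \<not> (\<exists>r\<in>L. p < r \<and> r < q)}"

definition delta_t :: "real \<Rightarrow> nat \<Rightarrow> nat \<Rightarrow> nat \<Rightarrow> real set" where
  "delta_t t a1 a2 x = consec_diffs (lenset t a1 a2 x)"

definition delta_S :: "real \<Rightarrow> nat \<Rightarrow> nat \<Rightarrow> real set" where
  "delta_S t a1 a2 = (\<Union>x\<in>numsg a1 a2. delta_t t a1 a2 x)"

definition mu :: "real \<Rightarrow> nat \<Rightarrow> nat \<Rightarrow> real \<Rightarrow> real" where
  "mu t a1 a2 r = tnorm t ((1 - r) / real a1) (r / real a2)"

definition r0 :: "real \<Rightarrow> nat \<Rightarrow> nat \<Rightarrow> real" where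
  "r0 t a1 a2 = (LEAST r. r \<in> {0..1} \<and> mu t a1 a2 r = 1 / real a2)"

definition Pt :: "real \<Rightarrow> nat \<Rightarrow> nat \<Rightarrow> real" where
  "Pt t a1 a2 = deriv (mu t a1 a2) (r0 t a1 a2)"

end

theory Submission
  imports Defs
begin

lemma tnorm_div:
  assumes "t > 0" "c > 0"
  shows "tnorm t (u/c) (v/c) = tnorm t u v / c"
proof -
  have "\<bar>u/c\<bar> powr t + \<bar>v/c\<bar> powr t = (\<bar>u\<bar> powr t + \<bar>v\<bar> powr t) / c powr t"
    using assms by (simp add: abs_divide powr_divide add_divide_distrib)
  moreover have "(c powr t) powr (1/t) = c" using assms by (simp add: powr_powr)
  ultimately show ?thesis using assms
    by (simp add: tnorm_def powr_divide)
qed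

lemma len_eq:
  assumes "t > 0" "a1 > 0" "a2 > 0" "m*a1+n*a2 = x" "x > 0"
  shows "tnorm t (real m) (real n) = real x * mu t a1 a2 (real n * a2 / real x)"
proof -
  have x: "real x = real m * a1 + real n * a2" proof -
    have "real x = real (m*a1+n*a2)" using assms(4) by simp
    then show ?thesis by simp
  qed
  have e1: "(1 - real n * a2 / real x) / a1 = real m / real x"
  proof -
    have "real x > 0" "real a1 > 0" using assms by auto
    then show ?thesis unfolding x by (simp add: divide_simps)
  qed
  have e2: "(real n * a2 / real x) / a2 = real n / real x"
    using assms by (simp add: field_simps)
  show ?thesis unfolding mu_def e1 e2 using tnorm_div[OF assms(1), of "real x"] assms by simp
qed

lemma g_convex:
  assumes "(p::real) \<ge> 1"
  shows "convex_on {0..} (\<lambda>x::real. x powr p)"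
proof (rule convex_on_linorderI)
  show "convex {0::real..}" by simp
  fix s x y :: real
  assume s: "0 < s" "s < 1" and xy: "x \<in> {0..}" "y \<in> {0..}" "x < y"
  show "((1 - s) *\<^sub>R x + s *\<^sub>R y) powr p \<le> (1 - s) * x powr p + s * y powr p"
  proof (cases "x = 0")
    case True
    have "(s * y) powr p = s powr p * y powr p" using s xy by (simp add: powr_mult)
    also have "\<dots> \<le> s * y powr p"
    proof (rule mult_right_mono)
      show "s powr p \<le> s" using s assms
        by (metis powr_le_one_le powr_one_eq_one powr_one_gt_zero_iff less_eq_real_def) 
    qed simp
    finally show ?thesis using True assms by simp
  next
    case False
    then have "x \<in> {0<..}" "y \<in> {0<..}" using xy by auto
    then show ?thesis using convex_onD[OF powr_convex[OF assms], of s x y] s by simp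
  qed
qed


definition hh :: "real \<Rightarrow> nat \<Rightarrow> nat \<Rightarrow> real \<Rightarrow> real" where
  "hh t a1 a2 r = ((1-r)/a1) powr t + (r/a2) powr t"

lemma hh_nonneg: "hh t a1 a2 r \<ge> 0"
  unfolding hh_def by simp

lemma mu_nonneg: "mu t a1 a2 r \<ge> 0"
  unfolding mu_def tnorm_def by simp

lemma mu_hh:
  assumes "r \<in> {0..1}"
  shows "mu t a1 a2 r = hh t a1 a2 r powr (1/t)"
  using assms unfolding mu_def tnorm_def hh_def by simp

lemma hh_mu:
  assumes "r \<in> {0..1}" "t > 0"
  shows "hh t a1 a2 r = mu t a1 a2 r powr t"
  using assms hh_nonneg[of t a1 a2 r] by (simp add: mu_hh powr_powr)

lemma mu_le_iff:
  assumes "r \<in> {0..1}" "s \<in> {0..1}" "t > 0"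
  shows "mu t a1 a2 r \<le> mu t a1 a2 s \<longleftrightarrow> hh t a1 a2 r \<le> hh t a1 a2 s"
proof
  assume "mu t a1 a2 r \<le> mu t a1 a2 s"
  then show "hh t a1 a2 r \<le> hh t a1 a2 s"
    using assms mu_nonneg by (simp add: hh_mu powr_mono2)
next
  assume "hh t a1 a2 r \<le> hh t a1 a2 s"
  then show "mu t a1 a2 r \<le> mu t a1 a2 s"
    using assms hh_nonneg by (simp add: mu_hh powr_mono2)
qed

lemma mu_less_iff:
  assumes "r \<in> {0..1}" "s \<in> {0..1}" "t > 0"
  shows "mu t a1 a2 r < mu t a1 a2 s \<longleftrightarrow> hh t a1 a2 r < hh t a1 a2 s"
  using mu_le_iff[OF assms(2,1,3), of a1 a2] by linarith

lemma hh_convex: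
  assumes "t \<ge> 1" "a1 > 0" "a2 > 0"
  shows "convex_on {0..1} (hh t a1 a2)"
proof (rule convex_onI)
  show "convex {0::real..1}" by simp
  fix s x y :: real
  assume s: "0 < s" "s < 1" and xy: "x \<in> {0..1}" "y \<in> {0..1}"
  have c: "convex_on {0..} (\<lambda>x::real. x powr t)" using g_convex assms by simp
  have e1: "(1 - ((1 - s) *\<^sub>R x + s *\<^sub>R y)) / a1 = (1-s) *\<^sub>R ((1-x)/a1) + s *\<^sub>R ((1-y)/a1)"
    using assms by (simp add: field_simps)
  have e2: "((1 - s) *\<^sub>R x + s *\<^sub>R y) / a2 = (1-s) *\<^sub>R (x/a2) + s *\<^sub>R (y/a2)"
    using assms by (simp add: field_simps)
  have i1: "((1 - ((1 - s) *\<^sub>R x + s *\<^sub>R y)) / a1) powr t \<le> (1-s) * ((1-x)/a1) powr t + s * ((1-y)/a1) powr t"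
    unfolding e1 by (rule convex_onD[OF c]) (use s xy in auto)
  have i2: "(((1 - s) *\<^sub>R x + s *\<^sub>R y) / a2) powr t \<le> (1-s) * (x/a2) powr t + s * (y/a2) powr t"
    unfolding e2 by (rule convex_onD[OF c]) (use s xy in auto)
  show "hh t a1 a2 ((1 - s) *\<^sub>R x + s *\<^sub>R y) \<le> (1 - s) * hh t a1 a2 x + s * hh t a1 a2 y"
    using i1 i2 unfolding hh_def by (simp add: algebra_simps)
qed

lemma mu_cont:
  assumes "t > 0" "a1 > 0" "a2 > 0"
  shows "continuous_on A (mu t a1 a2)"
  unfolding mu_def tnorm_def using assms
  by (intro continuous_on_powr' continuous_intros) auto


lemma mu_one: "t > 0 \<Longrightarrow> mu t a1 a2 1 = 1 / a2"
  unfolding mu_def tnorm_def by (simp add: powr_powr)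

lemma mu_zero: "t > 0 \<Longrightarrow> mu t a1 a2 0 = 1 / a1"
  unfolding mu_def tnorm_def by (simp add: powr_powr)

lemma r0_props:
  assumes "0 < a1" "a1 < a2" "t > 0"
  shows "r0 t a1 a2 \<in> {0..1}" "mu t a1 a2 (r0 t a1 a2) = 1/a2"
    "\<And>r. r \<in> {0..1} \<Longrightarrow> mu t a1 a2 r = 1/a2 \<Longrightarrow> r0 t a1 a2 \<le> r"
proof -
  define S where "S = {r \<in> {0..1::real}. mu t a1 a2 r = 1/a2}"
  have "closed S" unfolding S_def
    by (rule continuous_closed_preimage_constant) (use mu_cont assms in auto)
  moreover have "1 \<in> S" unfolding S_def using mu_one assms by auto
  moreover have "bdd_below S" unfolding S_def by (rule bdd_belowI[of _ 0]) auto
  ultimately have I: "Inf S \<in> S" using closed_contains_Inf by blast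
  have lo: "\<And>r. r \<in> S \<Longrightarrow> Inf S \<le> r" using \<open>bdd_below S\<close> by (simp add: cInf_lower)
  have "r0 t a1 a2 = Inf S" unfolding r0_def
    by (rule Least_equality) (use I lo in \<open>auto simp: S_def\<close>)
  then show "r0 t a1 a2 \<in> {0..1}" "mu t a1 a2 (r0 t a1 a2) = 1/a2"
    "\<And>r. r \<in> {0..1} \<Longrightarrow> mu t a1 a2 r = 1/a2 \<Longrightarrow> r0 t a1 a2 \<le> r"
    using I lo unfolding S_def by auto
qed

lemma mu_gt:
  assumes "0 < a1" "a1 < a2" "t > 0" "r \<in> {0..<r0 t a1 a2}"
  shows "mu t a1 a2 r > 1/a2"
proof (rule ccontr)
  assume "\<not> ?thesis"
  then have le: "mu t a1 a2 r \<le> 1/a2" by simp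
  have "1/real a2 \<le> mu t a1 a2 0" using mu_zero assms
    by (simp add: frac_le)
  then obtain x where x: "0 \<le> x" "x \<le> r" "mu t a1 a2 x = 1/a2"
  proof -
    have "continuous_on {0..r} (mu t a1 a2)" by (rule mu_cont) (use assms in auto)
    then show ?thesis using IVT2'[of "mu t a1 a2" r "1/a2" 0] le assms that \<open>1/real a2 \<le> mu t a1 a2 0\<close> by auto
  qed
  then have "r0 t a1 a2 \<le> x" using r0_props(3)[OF assms(1-3)] assms(4) r0_props(1)[OF assms(1-3)] by auto
  then show False using x assms by auto
qed

lemma mu_le:
  assumes "0 < a1" "a1 < a2" "t \<ge> 1" "r \<in> {r0 t a1 a2..1}"
  shows "mu t a1 a2 r \<le> 1/a2"
proof -
  have t: "t > 0" using assms by simp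
  note R = r0_props[OF assms(1,2) t]
  define \<rho> where "\<rho> = r0 t a1 a2"
  show ?thesis
  proof (cases "\<rho> = 1")
    case True then show ?thesis using assms mu_one[OF t] \<rho>_def by simp
  next
    case False
    then have "\<rho> < 1" using R \<rho>_def by auto
    define s where "s = (r - \<rho>) / (1 - \<rho>)"
    have s: "0 \<le> s" "s \<le> 1" using assms \<open>\<rho> < 1\<close> unfolding s_def \<rho>_def by auto
    have "s*(1-\<rho>) = r - \<rho>" using \<open>\<rho> < 1\<close> unfolding s_def by simp
    then have r: "r = (1 - s) *\<^sub>R \<rho> + s *\<^sub>R 1" by (simp add: algebra_simps)
    have "hh t a1 a2 r \<le> (1 - s) * hh t a1 a2 \<rho> + s * hh t a1 a2 1"
      unfolding r by (rule convex_onD[OF hh_convex]) (use assms s R \<rho>_def in auto)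
    moreover have "hh t a1 a2 \<rho> = hh t a1 a2 1"
      using hh_mu[of \<rho> t a1 a2] hh_mu[of 1 t a1 a2] R mu_one[OF t] \<rho>_def t by simp
    ultimately have "hh t a1 a2 r \<le> hh t a1 a2 1" by (simp add: algebra_simps)
    then have "mu t a1 a2 r \<le> mu t a1 a2 1"
      using mu_le_iff[of r 1 t a1 a2] assms R \<rho>_def by auto
    then show ?thesis using mu_one[OF t] by simp
  qed
qed

lemma mu_mono:
  assumes "0 < a1" "a1 < a2" "t \<ge> 1" "0 \<le> r" "r \<le> r'" "r' < r0 t a1 a2"
  shows "mu t a1 a2 r' \<le> mu t a1 a2 r"
proof -
  have t: "t > 0" using assms by simp
  note R = r0_props[OF assms(1,2) t]
  define \<rho> where "\<rho> = r0 t a1 a2"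
  have "r < \<rho>" using assms \<rho>_def by simp
  define s where "s = (r' - r) / (\<rho> - r)"
  have s: "0 \<le> s" "s < 1" using assms \<open>r < \<rho>\<close> unfolding s_def \<rho>_def by auto
  have "s*(\<rho> - r) = r' - r" using \<open>r < \<rho>\<close> unfolding s_def by simp
  then have r: "r' = (1 - s) *\<^sub>R r + s *\<^sub>R \<rho>" by (simp add: algebra_simps)
  have "hh t a1 a2 r' \<le> (1 - s) * hh t a1 a2 r + s * hh t a1 a2 \<rho>"
    unfolding r by (rule convex_onD[OF hh_convex]) (use assms s R \<rho>_def in auto)
  moreover have "hh t a1 a2 \<rho> < hh t a1 a2 r'"
  proof -
    have "mu t a1 a2 \<rho> < mu t a1 a2 r'" using mu_gt[of a1 a2 t r'] assms R \<rho>_def by auto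
    then show ?thesis using mu_less_iff[of \<rho> r' t a1 a2] R assms \<rho>_def by auto
  qed
  ultimately have "(1 - s) * hh t a1 a2 r' \<le> (1 - s) * hh t a1 a2 r"
    using s by (simp add: algebra_simps) (smt (verit) mult_left_mono)
  then have "hh t a1 a2 r' \<le> hh t a1 a2 r" using s by simp
  then show ?thesis using mu_le_iff[of r' r t a1 a2] assms R \<rho>_def by auto
qed


lemma mu_deriv:
  assumes "0 < \<rho>" "\<rho> < 1" "t > 0" "a1 > 0" "a2 > 0"
  shows "(mu t a1 a2 has_real_derivative deriv (mu t a1 a2) \<rho>) (at \<rho>)"
proof -
  define F where "F = (\<lambda>r::real. (((1-r)/a1) powr t + (r/a2) powr t) powr (1/t))"
  have "\<exists>D. (F has_real_derivative D) (at \<rho>)"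
    unfolding F_def using assms
    by (intro exI derivative_eq_intros refl) (auto simp: add_pos_pos)
  then obtain D where D: "(F has_real_derivative D) (at \<rho>)" by blast
  have "(mu t a1 a2 has_real_derivative D) (at \<rho>)"
  proof (rule has_field_derivative_transform_within_open[OF D, of "{0<..<1}"])
    show "\<And>x. x \<in> {0<..<1} \<Longrightarrow> F x = mu t a1 a2 x"
      unfolding F_def mu_def tnorm_def by simp
  qed (use assms in auto)
  then show ?thesis using DERIV_imp_deriv by metis
qed


lemma pair:
  fixes k0 :: real
  assumes a: "1 < a1" "a1 < a2" "coprime a1 a2" "t \<ge> 1"
    and rho: "0 < r0 t a1 a2" "r0 t a1 a2 < 1"
    and N: "N > 0" "real a1 \<le> real N * r0 t a1 a2"
    and k0: "k0 = real N * (1 - r0 t a1 a2) / a1" "k0 \<notin> \<int>"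
  shows "real N * a2 * (mu t a1 a2 (r0 t a1 a2 - (ceiling k0 - k0) * a1 / N) - mu t a1 a2 (r0 t a1 a2))
           \<in> delta_S t a1 a2"
proof -
  define \<rho> where "\<rho> = r0 t a1 a2"
  have t: "t > 0" using a by simp
  have a0: "a1 > 0" "a2 > 0" "real a1 > 0" "real a2 > 0" using a by auto
  note R = r0_props[OF a0(1) a(2) t]
  have k0pos: "k0 > 0" using k0 rho N a0 by simp
  define ks where "ks = nat (ceiling k0)"
  have ksr: "real ks = ceiling k0" unfolding ks_def using k0pos by simp
  have "k0 \<noteq> ceiling k0" using k0(2) by (metis Ints_of_int)
  then have ks1: "k0 < real ks" using ksr le_of_int_ceiling[of k0] by linarith
  have ks2: "real ks < k0 + 1" using ksr ceiling_correct[of k0] by linarith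
  have "real ks * a1 < real N"
  proof -
    have "real ks * a1 < (k0 + 1) * a1" using ks2 a0 by simp
    also have "\<dots> = real N * (1 - \<rho>) + a1" unfolding k0 \<rho>_def using a0 by (simp add: field_simps)
    also have "\<dots> \<le> real N" using N \<rho>_def by (simp add: algebra_simps)
    finally show ?thesis .
  qed
  then have ksN: "ks * a1 < N" by (metis of_nat_less_iff of_nat_mult)
  define x where "x = N * a2"
  have x0: "x > 0" "real x > 0" unfolding x_def using N a0 by auto
  define rs where "rs = \<rho> - (ceiling k0 - k0) * a1 / N"
  have rs: "rs = 1 - real ks * a1 / N"
    unfolding rs_def ksr[symmetric] using N a0 k0(1) unfolding \<rho>_def by (simp add: field_simps)
  have rs0: "0 \<le> rs" unfolding rs using \<open>real ks * a1 < real N\<close> N by (simp add: field_simps)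
  have rsr: "rs < \<rho>" unfolding rs_def using ks1 ksr a0 N by (simp add: field_simps)
  define p where "p = tnorm t (real (ks*a2)) (real (N - ks*a1))"
  have fp: "ks*a2*a1 + (N - ks*a1)*a2 = x" unfolding x_def using ksN
    by (metis add_mult_distrib le_add_diff_inverse less_or_eq_imp_le mult.commute mult.left_commute)
  have "p = real x * mu t a1 a2 (real (N - ks*a1) * a2 / real x)"
    unfolding p_def by (rule len_eq) (use t a0 fp x0 in auto)
  moreover have "real (N - ks*a1) * a2 / real x = rs"
    unfolding rs x_def using ksN N a0 by (simp add: of_nat_diff field_simps)
  ultimately have p: "p = real x * mu t a1 a2 rs" by simp
  define q where "q = tnorm t (real 0) (real N)"
  have fq: "0*a1 + N*a2 = x" unfolding x_def by simp
  have "q = real x * mu t a1 a2 (real N * a2 / real x)"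
    unfolding q_def by (rule len_eq) (use t a0 fq x0 in auto)
  then have q: "q = real N" unfolding x_def using mu_one[OF t] N a0 by simp
  have xrho: "real x * mu t a1 a2 \<rho> = real N" unfolding x_def using R \<rho>_def a0 by simp
  have val: "real N * a2 * (mu t a1 a2 rs - mu t a1 a2 \<rho>) = p - q"
    unfolding p q using xrho unfolding x_def by (simp add: algebra_simps)
  have mrs: "mu t a1 a2 rs > 1/a2" using mu_gt[OF a0(1) a(2) t, of rs] rs0 rsr \<rho>_def by auto
  have qp: "q < p" unfolding p q x_def using mrs a0 N
    by (simp add: field_simps)
  have pL: "p \<in> lenset t a1 a2 x" unfolding lenset_def factZ_def p_def using fp by blast
  have qL: "q \<in> lenset t a1 a2 x" unfolding lenset_def factZ_def q_def using fq by blast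
  have nob: "\<not> (\<exists>l \<in> lenset t a1 a2 x. q < l \<and> l < p)"
  proof
    assume "\<exists>l \<in> lenset t a1 a2 x. q < l \<and> l < p"
    then obtain m n where mn: "m*a1 + n*a2 = x" and l: "q < tnorm t (real m) (real n)" "tnorm t (real m) (real n) < p"
      unfolding lenset_def factZ_def by auto
    have nN: "n \<le> N" using mn a0 unfolding x_def
      by (metis le_add2 mult_le_cancel2 order_trans)
    have "m * a1 = (N - n) * a2" using mn unfolding x_def by (simp add: diff_mult_distrib)
    then have "a2 dvd m * a1" by simp
    then have "a2 dvd m" using a(3) coprime_dvd_mult_left_iff coprime_commute by blast
    then obtain k where m: "m = a2 * k" by (auto elim: dvdE)
    have kn: "k * a1 + n = N" using mn a0 unfolding x_def m
      by (metis add_mult_distrib mult.commute mult.left_commute nat_mult_eq_cancel1)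
    have kn': "real k * a1 + real n = real N" using kn by (metis of_nat_add of_nat_mult)
    define r where "r = 1 - real k * a1 / N"
    have "tnorm t (real m) (real n) = real x * mu t a1 a2 (real n * a2 / real x)"
      by (rule len_eq) (use t a0 mn x0 in auto)
    moreover have "real n * a2 / real x = r" unfolding r_def x_def using kn' N a0
      by (simp add: field_simps)
    ultimately have lr: "tnorm t (real m) (real n) = real x * mu t a1 a2 r" by simp
    show False
    proof (cases "real k \<le> k0")
      case True
      have "r \<ge> \<rho>" unfolding r_def using True unfolding k0 \<rho>_def using N a0 by (simp add: field_simps)
      moreover have "r \<le> 1" unfolding r_def by simp
      ultimately have "mu t a1 a2 r \<le> 1/a2" using mu_le[OF a0(1) a(2) a(4), of r] \<rho>_def by auto
      then have "real a2 * mu t a1 a2 r \<le> 1" using a0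
        by (simp add: field_simps)
      then have "real N * (real a2 * mu t a1 a2 r) \<le> real N * 1"
        by (intro mult_left_mono) auto
      then have "real x * mu t a1 a2 r \<le> real N" unfolding x_def by (simp add: algebra_simps)
      then show False using l lr q by simp
    next
      case False
      then have "ceiling k0 \<le> int k" using ceiling_le[of k0 "int k"] by simp
      then have "ks \<le> k" unfolding ks_def by (metis nat_int nat_mono)
      then have "r \<le> rs" unfolding r_def rs using N a0 by (simp add: field_simps)
      moreover have "0 \<le> r" unfolding r_def using kn' N by (simp add: field_simps)
      ultimately have "mu t a1 a2 rs \<le> mu t a1 a2 r" using mu_mono[OF a0(1) a(2) a(4), of r rs] rsr \<rho>_def by auto
      then have "p \<le> real x * mu t a1 a2 r" unfolding p using x0 by simp
      then show False using l lr by simp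
    qed
  qed
  have "p - q \<in> delta_t t a1 a2 x" unfolding delta_t_def consec_diffs_def
    using pL qL qp nob by blast
  moreover have "x \<in> numsg a1 a2" unfolding numsg_def using fq by (metis (mono_tags, lifting) mem_Collect_eq)
  ultimately have "p - q \<in> delta_S t a1 a2" unfolding delta_S_def by blast
  then show ?thesis using val unfolding rs_def \<rho>_def by simp
qed


lemma ceil_floor: "(x::real) \<notin> \<int> \<Longrightarrow> ceiling x = floor x + 1"
  by (metis ceiling_altdef floor_of_int Ints_of_int)

theorem proposition1:
  fixes a1 a2 :: nat and t :: real
  assumes "1 < a1" and "a1 < a2" and "coprime a1 a2"
    and "1 < t"
    and "r0 t a1 a2 \<notin> \<rat>"
  shows "{0 .. \<bar>real a1 * real a2 * Pt t a1 a2\<bar>} \<subseteq> closure (delta_S t a1 a2)"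
proof
  have t: "t > 0" "t \<ge> 1" using assms by auto
  have a0: "a1 > 0" "a2 > 0" "real a1 > 0" "real a2 > 0" using assms by auto
  define \<rho> where "\<rho> = r0 t a1 a2"
  note R = r0_props[OF a0(1) assms(2) t(1)]
  have "\<rho> \<noteq> 0" "\<rho> \<noteq> 1" using assms(5) unfolding \<rho>_def by auto
  then have rho: "0 < \<rho>" "\<rho> < 1" using R unfolding \<rho>_def by auto
  define P where "P = Pt t a1 a2"
  have dP: "(mu t a1 a2 has_real_derivative P) (at \<rho>)"
    unfolding P_def Pt_def \<rho>_def[symmetric] by (rule mu_deriv) (use rho t a0 in auto)
  have Pneg: "P \<le> 0"
  proof (rule ccontr)
    assume "\<not> P \<le> 0"
    then obtain e where e: "e > 0" "\<And>h. h > 0 \<Longrightarrow> h < e \<Longrightarrow> mu t a1 a2 (\<rho> - h) < mu t a1 a2 \<rho>"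
      using DERIV_pos_inc_left[OF dP] by force
    define h where "h = min (e/2) (\<rho>/2)"
    have h: "h > 0" "h < e" "h < \<rho>" unfolding h_def using e rho by auto
    have "mu t a1 a2 (\<rho> - h) > 1/a2" using mu_gt[OF a0(1) assms(2) t(1), of "\<rho> - h"] h \<rho>_def by auto
    then show False using e(2)[OF h(1,2)] R \<rho>_def by simp
  qed
  define Dd where "Dd = \<bar>real a1 * real a2 * P\<bar>"
  have Dd: "Dd = - (real a1 * real a2 * P)" unfolding Dd_def using Pneg a0
    by (intro abs_of_nonpos mult_nonneg_nonpos) auto
  define \<beta> where "\<beta> = (1 - \<rho>) / a1"
  have beta: "\<beta> \<notin> \<rat>"
  proof
    assume "\<beta> \<in> \<rat>"
    then have "1 - a1 * \<beta> \<in> \<rat>" by simp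
    moreover have "1 - a1 * \<beta> = \<rho>" unfolding \<beta>_def using a0 by simp
    ultimately show False using assms(5) \<rho>_def by simp
  qed
  fix d assume d: "d \<in> {0 .. \<bar>real a1 * real a2 * Pt t a1 a2\<bar>}"
  then have d': "0 \<le> d" "d \<le> Dd" unfolding Dd_def P_def by auto
  show "d \<in> closure (delta_S t a1 a2)"
    unfolding closure_approachable
  proof (intro allI impI)
    fix \<epsilon> :: real assume \<epsilon>: "\<epsilon> > 0"
    define \<eta> where "\<eta> = \<epsilon> / (2 * a1 * a2)"
    have \<eta>: "\<eta> > 0" unfolding \<eta>_def using \<epsilon> a0 by simp
    have "((\<lambda>h. (mu t a1 a2 (\<rho> + h) - mu t a1 a2 \<rho>) / h) \<longlongrightarrow> P) (at 0)"
      using dP by (simp add: DERIV_def)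
    then obtain \<delta> where \<delta>: "\<delta> > 0"
      "\<And>h. h \<noteq> 0 \<Longrightarrow> \<bar>h\<bar> < \<delta> \<Longrightarrow> \<bar>(mu t a1 a2 (\<rho> + h) - mu t a1 a2 \<rho>) / h - P\<bar> < \<eta>"
      using \<eta> unfolding LIM_eq by force
    obtain M :: nat where M: "a1/\<delta> + a1/\<rho> + 1 < real M" using reals_Archimedean2 by blast
    have Mpos: "M > 0" "real M > 0" using M a0 \<delta> rho
      by (smt (verit, ccfv_SIG) divide_nonneg_pos of_nat_0_less_iff)+
    define \<alpha> where "\<alpha> = (if Dd = 0 then 0 else 1 - d/Dd)"
    have \<alpha>: "0 \<le> \<alpha>" "\<alpha> \<le> 1" unfolding \<alpha>_def using d' by auto
    define \<epsilon>' where "\<epsilon>' = \<epsilon> / (2 * (Dd + 1))"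
    have \<epsilon>': "\<epsilon>' > 0" unfolding \<epsilon>'_def using \<epsilon> d' by simp
    have Mb: "real M * \<beta> \<notin> \<rat>"
    proof
      assume "real M * \<beta> \<in> \<rat>"
      then have "(real M * \<beta>) / real M \<in> \<rat>" using Rats_divide Rats_of_nat by blast
      moreover have "(real M * \<beta>) / real M = \<beta>" using Mpos by simp
      ultimately show False using beta by simp
    qed
    obtain k :: nat where k: "k > 0" "\<bar>frac (real k * (real M * \<beta>)) - \<alpha>\<bar> < \<epsilon>'"
      using Kronecker_approx_1_explicit[OF Mb \<alpha> \<epsilon>'] by blast
    define N where "N = k * M"
    have N: "N > 0" "real N \<ge> real M" unfolding N_def using k Mpos by auto
    define k0 where "k0 = real N * (1 - \<rho>) / a1"
    have k0b: "k0 = real k * (real M * \<beta>)" unfolding k0_def \<beta>_def N_def by simp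
    have k0Z: "k0 \<notin> \<int>"
    proof
      assume "k0 \<in> \<int>"
      then have "k0 \<in> \<rat>" using Ints_subset_Rats by blast
      then have "k0 / real N \<in> \<rat>" using Rats_divide Rats_of_nat by blast
      moreover have "k0 / real N = \<beta>" unfolding k0_def \<beta>_def using N by simp
      ultimately show False using beta by simp
    qed
    have Na: "real a1 \<le> real N * \<rho>"
    proof -
      have "a1 / \<rho> \<le> real N" using M N by (smt (verit) a0(3) \<delta>(1) divide_nonneg_pos)
      then show ?thesis using rho by (simp add: field_simps)
    qed
    define y where "y = real N * a2 * (mu t a1 a2 (\<rho> - (ceiling k0 - k0) * a1 / N) - mu t a1 a2 \<rho>)"
    have yS: "y \<in> delta_S t a1 a2"
      unfolding y_def \<rho>_def
      by (rule pair) (use assms t rho N Na k0Z in \<open>auto simp: \<rho>_def k0_def\<close>)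
    define \<theta> where "\<theta> = ceiling k0 - k0"
    have \<theta>: "\<theta> = 1 - frac k0" unfolding \<theta>_def frac_def using ceil_floor[OF k0Z] by simp
    have \<theta>01: "0 < \<theta>" "\<theta> < 1" using \<theta> frac_lt_1[of k0] frac_ge_0[of k0] k0Z
      by (auto simp: frac_eq_0_iff)
    define h where "h = - \<theta> * a1 / N"
    have h0: "h \<noteq> 0" unfolding h_def using \<theta>01 a0 N by simp
    have habs: "\<bar>h\<bar> = \<theta> * a1 / N" unfolding h_def using \<theta>01 a0 N by simp
    have "\<bar>h\<bar> < a1 / N" unfolding habs using \<theta>01 a0 N by (simp add: divide_strict_right_mono)
    also have "\<dots> \<le> a1 / M" using N Mpos a0 by (simp add: frac_le)
    also have "\<dots> < \<delta>"
    proof -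
      have "a1 / \<delta> < real M" using M a0 rho by (smt (verit) divide_nonneg_pos)
      then show ?thesis using \<delta> Mpos by (simp add: field_simps)
    qed
    finally have hd: "\<bar>h\<bar> < \<delta>" .
    have q: "\<bar>(mu t a1 a2 (\<rho> + h) - mu t a1 a2 \<rho>) / h - P\<bar> < \<eta>" using \<delta>(2)[OF h0 hd] .
    have yh: "y = real N * a2 * (mu t a1 a2 (\<rho> + h) - mu t a1 a2 \<rho>)"
    proof -
      have "\<rho> + h = \<rho> - \<theta> * a1 / N" unfolding h_def by (simp add: field_simps)
      then show ?thesis unfolding y_def \<theta>_def by simp
    qed
    have "y - Dd * \<theta> = real N * a2 * h * ((mu t a1 a2 (\<rho> + h) - mu t a1 a2 \<rho>) / h - P)"
      unfolding yh Dd h_def using N h0 a0 unfolding h_def by (simp add: field_simps)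
    then have "\<bar>y - Dd * \<theta>\<bar> = real N * a2 * \<bar>h\<bar> * \<bar>(mu t a1 a2 (\<rho> + h) - mu t a1 a2 \<rho>) / h - P\<bar>"
      by (simp add: abs_mult)
    also have "\<dots> \<le> real N * a2 * \<bar>h\<bar> * \<eta>"
      using q by (intro mult_left_mono) auto
    also have "\<dots> = a1 * a2 * \<theta> * \<eta>" unfolding habs using N by simp
    also have "\<dots> \<le> a1 * a2 * \<eta>" using \<theta>01 \<eta> a0 by simp
    also have "\<dots> = \<epsilon> / 2" unfolding \<eta>_def using a0 by simp
    finally have c1: "\<bar>y - Dd * \<theta>\<bar> \<le> \<epsilon> / 2" .
    have c2: "\<bar>Dd * \<theta> - d\<bar> < \<epsilon> / 2"
    proof (cases "Dd = 0")
      case True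
      then show ?thesis using d' \<epsilon> by simp
    next
      case False
      then have Dp: "Dd > 0" using d' by simp
      have "Dd * \<theta> - d = Dd * (\<alpha> - frac k0)" unfolding \<theta> \<alpha>_def using False by (simp add: field_simps)
      then have "\<bar>Dd * \<theta> - d\<bar> = Dd * \<bar>frac k0 - \<alpha>\<bar>" using Dp by (simp add: abs_mult abs_minus_commute)
      also have "\<dots> \<le> Dd * \<epsilon>'" using k(2) k0b Dp by simp
      also have "\<dots> < \<epsilon> / 2" unfolding \<epsilon>'_def using Dp \<epsilon> by (simp add: field_simps)
      finally show ?thesis .
    qed
    show "\<exists>y\<in>delta_S t a1 a2. dist y d < \<epsilon>"
    proof (intro bexI[of _ y])
      show "dist y d < \<epsilon>" unfolding dist_real_def using c1 c2 by linarith
    qed (rule yS)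
  qed
qed

end
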